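(* Let $V^{\bullet\bullet}$ be an $N=2$ supersymmetric complex. Then every row of $V^{\bullet\bullet}$ except possibly the $0$th row (i.e. each complex $(V^{\bullet,j},D_1)$ with $j\neq0$) is exact with respect to $D_1$, and every column except possibly the $0$th column (each $(V^{i,\bullet},D_2)$ with $i\ne0$) is exact with respect to $D_2$.
   Context: Let $G=\underline{\mathrm{Aut}}(\mathbb A^{0|2})$ be the group super-scheme of automorphisms of $\mathrm{Spec}\,\Lambda[\eta_1,\eta_2]$ ($\eta_i$ odd); its $R$-points are substitutions $\eta_i\mapsto a^i+b^i_1\eta_1+b^i_2\eta_2+c^i\eta_1\eta_2$ with $(b^i_j)$ invertible; it is isomorphic to $SL_{1|2}$, with Lie superalgebra $\mathrm{Der}\,\Lambda[\eta_1,\eta_2]$. An $N=2$ supersymmetric complex is a super vector space $V$ with an action of $G$. The action of the torus $\mathbb G_m\times\mathbb G_m$ (diagonal substitutions $\eta_i\mapsto b_i\eta_i$) gives a bigrading $V=\bigoplus V^{ij}$ on which $\Theta_1=\eta_1\partial/\partial\eta_1$ acts by $i$ and $\Theta_2=\eta_2\partial/\partial\eta_2$ by $j$; the odd derivations $D_1=\partial/\partial\eta_1$, $D_2=\partial/\partial\eta_2$ act as anticommuting square-zero differentials of bidegrees $(1,0)$ and $(0,1)$, making $V^{\bullet\bullet}$ a double complex; row $j$ means $V^{\bullet,j}$ and column $i$ means $V^{i,\bullet}$. *)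

theory Defs
  imports Complex_Main "HOL-Library.Function_Algebras"
begin

text \<open>The Grassmann algebra Lambda[eta1,eta2] over a field 'k, as coefficient
functions on the four monomials 1, eta1, eta2, eta1 eta2.\<close>

datatype idx = I1 | I2
datatype mon = M0 | M1 | M2 | M12

type_synonym 'k grass = "mon \<Rightarrow> 'k"

definition eta_mul :: "idx \<Rightarrow> 'k::comm_ring_1 grass \<Rightarrow> 'k grass" where
  "eta_mul a f = (case a of
      I1 \<Rightarrow> (\<lambda>m. case m of M0 \<Rightarrow> 0 | M1 \<Rightarrow> f M0 | M2 \<Rightarrow> 0 | M12 \<Rightarrow> f M2)
    | I2 \<Rightarrow> (\<lambda>m. case m of M0 \<Rightarrow> 0 | M1 \<Rightarrow> 0 | M2 \<Rightarrow> f M0 | M12 \<Rightarrow> - f M1))"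

text \<open>The odd (left) partial derivatives d/d eta_a.\<close>
definition pd :: "idx \<Rightarrow> 'k::comm_ring_1 grass \<Rightarrow> 'k grass" where
  "pd a f = (case a of
      I1 \<Rightarrow> (\<lambda>m. case m of M0 \<Rightarrow> f M1 | M1 \<Rightarrow> 0 | M2 \<Rightarrow> f M12 | M12 \<Rightarrow> 0)
    | I2 \<Rightarrow> (\<lambda>m. case m of M0 \<Rightarrow> f M2 | M1 \<Rightarrow> - f M12 | M2 \<Rightarrow> 0 | M12 \<Rightarrow> 0))"

text \<open>Homogeneous basis of the Lie superalgebra Der Lambda[eta1,eta2]:
  E a b = eta_a d/d eta_b (even), D b = d/d eta_b (odd),
  F b = eta1 eta2 d/d eta_b (odd).\<close>
datatype gb = E idx idx | D idx | F idx

definition gbasis :: "gb set" where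
  "gbasis = {E I1 I1, E I1 I2, E I2 I1, E I2 I2, D I1, D I2, F I1, F I2}"

fun gb_odd :: "gb \<Rightarrow> bool" where
  "gb_odd (E a b) = False"
| "gb_odd (D b) = True"
| "gb_odd (F b) = True"

fun gb_op :: "gb \<Rightarrow> 'k::comm_ring_1 grass \<Rightarrow> 'k grass" where
  "gb_op (E a b) = eta_mul a \<circ> pd b"
| "gb_op (D b) = pd b"
| "gb_op (F b) = eta_mul I1 \<circ> eta_mul I2 \<circ> pd b"

definition scomm :: "bool \<Rightarrow> ('a \<Rightarrow> 'a::ab_group_add) \<Rightarrow> ('a \<Rightarrow> 'a) \<Rightarrow> 'a \<Rightarrow> 'a" where
  "scomm s A B = (\<lambda>u. if s then A (B u) + B (A u) else A (B u) - B (A u))"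

text \<open>Bigraded piece V^{ij}: Theta1 = eta1 d/d eta1 acts by i, Theta2 = eta2 d/d eta2 acts by j.\<close>
definition Vbig :: "('k::field \<Rightarrow> 'v \<Rightarrow> 'v) \<Rightarrow> (gb \<Rightarrow> 'v \<Rightarrow> 'v) \<Rightarrow> int \<Rightarrow> int \<Rightarrow> 'v set" where
  "Vbig scale rho i j =
     {v. rho (E I1 I1) v = scale (of_int i) v \<and> rho (E I2 I2) v = scale (of_int j) v}"

text \<open>An N=2 supersymmetric complex, at the infinitesimal level: a super vector space
  V = V_even (+) V_odd over 'k with an action of Der Lambda[eta1,eta2]
  (by parity-respecting linear operators; with the sign convention
  [rho x, rho y] = - rho [x,y] coming from the group acting by substitutions,
  which is the convention under which D1, D2 have bidegrees (1,0), (0,1)),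
  such that V is the sum of the joint weight spaces V^{ij} of Theta1, Theta2.\<close>
definition is_N2_susy_complex ::
  "('k::field_char_0 \<Rightarrow> 'v::ab_group_add \<Rightarrow> 'v) \<Rightarrow> (bool \<Rightarrow> 'v set) \<Rightarrow> (gb \<Rightarrow> 'v \<Rightarrow> 'v) \<Rightarrow> bool"
where
  "is_N2_susy_complex scale Vpar rho \<longleftrightarrow>
     vector_space scale \<and>
     (\<forall>p. Modules.module.subspace scale (Vpar p)) \<and>
     (\<forall>v. \<exists>!w. fst w \<in> Vpar False \<and> snd w \<in> Vpar True \<and> v = fst w + snd w) \<and>
     (\<forall>x. Vector_Spaces.linear scale scale (rho x)) \<and>
     (\<forall>x p. rho x ` Vpar p \<subseteq> Vpar (p \<noteq> gb_odd x)) \<and>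
     (\<forall>x\<in>gbasis. \<forall>y\<in>gbasis. \<forall>c :: gb \<Rightarrow> 'k.
        scomm (gb_odd x \<and> gb_odd y) (gb_op x) (gb_op y)
          = (\<lambda>f m. \<Sum>z\<in>gbasis. c z * gb_op z f m)
        \<longrightarrow> scomm (gb_odd x \<and> gb_odd y) (rho x) (rho y)
          = (\<lambda>v. - (\<Sum>z\<in>gbasis. scale (c z) (rho z v)))) \<and>
     (\<forall>v. v \<in> Modules.module.span scale (\<Union>i j. Vbig scale rho i j))"

end

theory Submission imports Defs begin
lemma sum_gb: "(\<Sum>z\<in>gbasis. g z) = g (E I1 I1) + g (E I1 I2) + g (E I2 I1) + g (E I2 I2) + g (D I1) + g (D I2) + g (F I1) + g (F I2)"
  by (simp add: gbasis_def add.assoc)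
lemma a1: "scomm (gb_odd (D I1) \<and> gb_odd (F I2)) (gb_op (D I1)) (gb_op (F I2)) = (\<lambda>f m. \<Sum>z\<in>gbasis. (if z = E I2 I2 then 1 else 0) * gb_op z (f::'k::comm_ring_1 grass) m)"
  by (auto simp: sum_gb scomm_def eta_mul_def pd_def fun_eq_iff split: mon.split)
lemma a2: "scomm (gb_odd (E I1 I1) \<and> gb_odd (F I2)) (gb_op (E I1 I1)) (gb_op (F I2)) = (\<lambda>f m. \<Sum>z\<in>gbasis. (if z = F I2 then 1 else 0) * gb_op z (f::'k::comm_ring_1 grass) m)"
  by (auto simp: sum_gb scomm_def eta_mul_def pd_def fun_eq_iff split: mon.split)
lemma a3: "scomm (gb_odd (E I2 I2) \<and> gb_odd (F I2)) (gb_op (E I2 I2)) (gb_op (F I2)) = (\<lambda>f m. \<Sum>z\<in>gbasis. (0::'k::comm_ring_1) * gb_op z (f::'k::comm_ring_1 grass) m)"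
  by (auto simp: sum_gb scomm_def eta_mul_def pd_def fun_eq_iff split: mon.split)
lemma b1: "scomm (gb_odd (D I2) \<and> gb_odd (F I1)) (gb_op (D I2)) (gb_op (F I1)) = (\<lambda>f m. \<Sum>z\<in>gbasis. (if z = E I1 I1 then -1 else 0) * gb_op z (f::'k::comm_ring_1 grass) m)"
  by (auto simp: sum_gb scomm_def eta_mul_def pd_def fun_eq_iff split: mon.split)
lemma b2: "scomm (gb_odd (E I1 I1) \<and> gb_odd (F I1)) (gb_op (E I1 I1)) (gb_op (F I1)) = (\<lambda>f m. \<Sum>z\<in>gbasis. (0::'k::comm_ring_1) * gb_op z (f::'k::comm_ring_1 grass) m)"
  by (auto simp: sum_gb scomm_def eta_mul_def pd_def fun_eq_iff split: mon.split)
lemma b3: "scomm (gb_odd (E I2 I2) \<and> gb_odd (F I1)) (gb_op (E I2 I2)) (gb_op (F I1)) = (\<lambda>f m. \<Sum>z\<in>gbasis. (if z = F I1 then 1 else 0) * gb_op z (f::'k::comm_ring_1 grass) m)"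
  by (auto simp: sum_gb scomm_def eta_mul_def pd_def fun_eq_iff split: mon.split)

lemma grp: "(a::'a::ab_group_add) - b = - c \<Longrightarrow> a = b - c"
proof -
  assume h: "a - b = - c"
  have "a = (a - b) + b" by simp
  also have "\<dots> = b - c" using h by simp
  finally show ?thesis .
qed

theorem proposition2p3p7:
  fixes scale :: "'k::field_char_0 \<Rightarrow> 'v::ab_group_add \<Rightarrow> 'v"
    and Vpar :: "bool \<Rightarrow> 'v set"
    and rho :: "gb \<Rightarrow> 'v \<Rightarrow> 'v"
  assumes "is_N2_susy_complex scale Vpar rho"
  shows "(\<forall>i j. j \<noteq> 0 \<longrightarrow> (\<forall>v \<in> Vbig scale rho i j. rho (D I1) v = 0 \<longrightarrow>
             (\<exists>w \<in> Vbig scale rho (i - 1) j. rho (D I1) w = v)))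
       \<and> (\<forall>i j. i \<noteq> 0 \<longrightarrow> (\<forall>v \<in> Vbig scale rho i j. rho (D I2) v = 0 \<longrightarrow>
             (\<exists>w \<in> Vbig scale rho i (j - 1). rho (D I2) w = v)))"
proof -
  have VS: "vector_space scale" and lin: "\<And>x. Vector_Spaces.linear scale scale (rho x)"
    and rel: "\<And>x y c. x\<in>gbasis \<Longrightarrow> y\<in>gbasis \<Longrightarrow>
        scomm (gb_odd x \<and> gb_odd y) (gb_op x) (gb_op y)
          = (\<lambda>f m. \<Sum>z\<in>gbasis. c z * gb_op z f m)
        \<Longrightarrow> scomm (gb_odd x \<and> gb_odd y) (rho x) (rho y)
          = (\<lambda>v. - (\<Sum>z\<in>gbasis. scale (c z) (rho z v)))"
    using assms unfolding is_N2_susy_complex_def by blast+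
  have rs: "\<And>x a u. rho x (scale a u) = scale a (rho x u)"
    using lin by (simp add: Vector_Spaces.linear_iff)
  interpret vector_space scale by (rule VS)
  have r0: "\<And>x. rho x 0 = 0" using rs[of _ 0 0] by simp
  have rneg: "\<And>x u. rho x (- u) = - rho x u" using rs[of _ "-1"] by (simp add: scale_minus_left)
  have inb: "E I1 I1 \<in> gbasis" "E I2 I2 \<in> gbasis" "D I1 \<in> gbasis" "D I2 \<in> gbasis"
     "F I1 \<in> gbasis" "F I2 \<in> gbasis" by (auto simp: gbasis_def)
  have A1: "\<And>u. rho (D I1) (rho (F I2) u) + rho (F I2) (rho (D I1) u) = - rho (E I2 I2) u"
    using fun_cong[OF rel[OF inb(3) inb(6) a1]] by (simp add: scomm_def sum_gb)
  have A2: "\<And>u. rho (E I1 I1) (rho (F I2) u) - rho (F I2) (rho (E I1 I1) u) = - rho (F I2) u"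
    using fun_cong[OF rel[OF inb(1) inb(6) a2]] by (simp add: scomm_def sum_gb)
  have A3: "\<And>u. rho (E I2 I2) (rho (F I2) u) - rho (F I2) (rho (E I2 I2) u) = 0"
    using fun_cong[OF rel[OF inb(2) inb(6) a3]] by (simp add: scomm_def sum_gb)
  have B1: "\<And>u. rho (D I2) (rho (F I1) u) + rho (F I1) (rho (D I2) u) = rho (E I1 I1) u"
    using fun_cong[OF rel[OF inb(4) inb(5) b1]] by (simp add: scomm_def sum_gb)
  have B2: "\<And>u. rho (E I1 I1) (rho (F I1) u) - rho (F I1) (rho (E I1 I1) u) = 0"
    using fun_cong[OF rel[OF inb(1) inb(5) b2]] by (simp add: scomm_def sum_gb)
  have B3: "\<And>u. rho (E I2 I2) (rho (F I1) u) - rho (F I1) (rho (E I2 I2) u) = - rho (F I1) u"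
    using fun_cong[OF rel[OF inb(2) inb(5) b3]] by (simp add: scomm_def sum_gb)
  have P1: "\<exists>w \<in> Vbig scale rho (i - 1) j. rho (D I1) w = v"
    if j: "j \<noteq> 0" and v: "v \<in> Vbig scale rho i j" and d: "rho (D I1) v = 0" for i j v
  proof -
    have v1: "rho (E I1 I1) v = scale (of_int i) v" and v2: "rho (E I2 I2) v = scale (of_int j) v"
      using v by (auto simp: Vbig_def)
    define w where "w = scale (- inverse (of_int j)) (rho (F I2) v)"
    have jj: "(of_int j :: 'k) \<noteq> 0" using j by simp
    have "rho (D I1) w = scale (- inverse (of_int j)) (- scale (of_int j) v)"
      using A1[of v] d v2 by (simp add: w_def rs r0 rneg)
    also have "\<dots> = v" using jj by (simp add: scale_minus_right)
    finally have 1: "rho (D I1) w = v" .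
    have e1: "rho (E I1 I1) (rho (F I2) v) = scale (of_int (i - 1)) (rho (F I2) v)"
    proof -
      have "rho (E I1 I1) (rho (F I2) v) - scale (of_int i) (rho (F I2) v) = - rho (F I2) v"
        using A2[of v] v1 by (simp add: rs)
      hence "rho (E I1 I1) (rho (F I2) v) = scale (of_int i) (rho (F I2) v) - rho (F I2) v"
        by (rule grp)
      thus ?thesis by (simp add: scale_left_diff_distrib)
    qed
    have e2: "rho (E I2 I2) (rho (F I2) v) = scale (of_int j) (rho (F I2) v)"
      using A3[of v] v2 by (simp add: rs)
    have "w \<in> Vbig scale rho (i - 1) j"
      using e1 e2 by (simp add: Vbig_def w_def rs rneg mult.commute del: of_int_diff)
    with 1 show ?thesis by blast
  qed
  have P2: "\<exists>w \<in> Vbig scale rho i (j - 1). rho (D I2) w = v"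
    if j: "i \<noteq> 0" and v: "v \<in> Vbig scale rho i j" and d: "rho (D I2) v = 0" for i j v
  proof -
    have v1: "rho (E I1 I1) v = scale (of_int i) v" and v2: "rho (E I2 I2) v = scale (of_int j) v"
      using v by (auto simp: Vbig_def)
    define w where "w = scale (inverse (of_int i)) (rho (F I1) v)"
    have jj: "(of_int i :: 'k) \<noteq> 0" using j by simp
    have "rho (D I2) w = scale (inverse (of_int i)) (scale (of_int i) v)"
      using B1[of v] d v1 by (simp add: w_def rs r0 rneg)
    also have "\<dots> = v" using jj by simp
    finally have 1: "rho (D I2) w = v" .
    have e1: "rho (E I2 I2) (rho (F I1) v) = scale (of_int (j - 1)) (rho (F I1) v)"
    proof -
      have "rho (E I2 I2) (rho (F I1) v) - scale (of_int j) (rho (F I1) v) = - rho (F I1) v"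
        using B3[of v] v2 by (simp add: rs)
      hence "rho (E I2 I2) (rho (F I1) v) = scale (of_int j) (rho (F I1) v) - rho (F I1) v"
        by (rule grp)
      thus ?thesis by (simp add: scale_left_diff_distrib)
    qed
    have e2: "rho (E I1 I1) (rho (F I1) v) = scale (of_int i) (rho (F I1) v)"
      using B2[of v] v1 by (simp add: rs)
    have "w \<in> Vbig scale rho i (j - 1)"
      using e1 e2 by (simp add: Vbig_def w_def rs rneg mult.commute del: of_int_diff)
    with 1 show ?thesis by blast
  qed
  show ?thesis using P1 P2 by blast
qed

end
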